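(* Let $A,L$ be real symmetric $n\times n$ matrices such that the real Lie algebra generated by $iA$ and $iL$ equals $u(n)$. Let $\mathcal{S}$ be the real linear span of all matrices of the form $ad_{iA}^{k_1}\, ad_{iL}^{k_2}\cdots ad_{iA}^{k_{s-1}}\, ad_{iL}^{k_s}\,[iA,iL]$, where $s$ and $k_1,\dots,k_s$ range over nonnegative integers. Then $\mathcal{S}=su(n)$.
   Context: $ad_X(Y):=[X,Y]=XY-YX$. The real Lie algebra generated by a set of matrices is the smallest real vector space containing them and closed under commutators. $u(n)$ is the real Lie algebra of $n\times n$ complex skew-Hermitian matrices, and $su(n)$ is the real Lie algebra of $n\times n$ complex skew-Hermitian matrices with zero trace. *)

theory Defs
  imports "HOL-Analysis.Analysis"
begin

type_synonym 'n cmat = "complex^'n^'n"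

definition comm :: "'n::finite cmat \<Rightarrow> 'n cmat \<Rightarrow> 'n cmat" where
  "comm X Y = X ** Y - Y ** X"

definition ad :: "'n::finite cmat \<Rightarrow> 'n cmat \<Rightarrow> 'n cmat" where
  "ad X Y = comm X Y"

definition imat :: "real^'n^'n \<Rightarrow> complex^'n^'n" where
  "imat A = (\<chi> i j. \<i> * complex_of_real (A $ i $ j))"

definition adjoint_mat :: "'n::finite cmat \<Rightarrow> 'n cmat" where
  "adjoint_mat M = (\<chi> i j. cnj (M $ j $ i))"

definition u_alg :: "'n::finite cmat set" where
  "u_alg = {M. adjoint_mat M = - M}"

definition su_alg :: "'n::finite cmat set" where
  "su_alg = {M. adjoint_mat M = - M \<and> trace M = 0}"

definition lie_gen :: "'n::finite cmat set \<Rightarrow> 'n cmat set" where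
  "lie_gen G = \<Inter> {V. subspace V \<and> G \<subseteq> V \<and> (\<forall>X\<in>V. \<forall>Y\<in>V. comm X Y \<in> V)}"

fun alt_word :: "'n::finite cmat \<Rightarrow> 'n cmat \<Rightarrow> nat list \<Rightarrow> 'n cmat \<Rightarrow> 'n cmat" where
  "alt_word X Y [] M = M"
| "alt_word X Y (k # ks) M = (ad X ^^ k) (alt_word Y X ks M)"

end

theory Submission
  imports Defs
begin

lemma comm_add_right: "comm X (Y + Z) = comm X Y + comm X Z"
  unfolding comm_def by (simp add: matrix_add_ldistrib vec_eq_iff matrix_matrix_mult_def sum.distrib algebra_simps)
lemma comm_add_left: "comm (Y + Z) X = comm Y X + comm Z X"
  unfolding comm_def by (simp add: vec_eq_iff matrix_matrix_mult_def sum.distrib algebra_simps)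
lemma comm_scale_right: "comm X (c *\<^sub>R Y) = c *\<^sub>R comm X Y"
  unfolding comm_def by (simp add: matrix_scalar_ac scalar_matrix_assoc algebra_simps)
lemma comm_scale_left: "comm (c *\<^sub>R Y) X = c *\<^sub>R comm Y X"
  unfolding comm_def by (simp add: matrix_scalar_ac scalar_matrix_assoc algebra_simps)
lemma comm_antisym: "comm X Y = - comm Y X"
  unfolding comm_def by simp
lemma comm_self: "comm X X = 0"
  unfolding comm_def by simp
lemma msub_l: "(A::'n::finite cmat) ** (B - C) = A ** B - A ** C"
  by (simp add: vec_eq_iff matrix_matrix_mult_def sum_subtractf algebra_simps)
lemma msub_r: "((B::'n::finite cmat) - C) ** A = B ** A - C ** A"
  by (simp add: vec_eq_iff matrix_matrix_mult_def sum_subtractf algebra_simps)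
lemma jacobi: "comm (comm X1 X2) Y = comm X1 (comm X2 Y) - comm X2 (comm X1 Y)"
  unfolding comm_def by (simp add: msub_l msub_r matrix_mul_assoc algebra_simps)
lemma linear_comm_right: "linear (comm X)"
  by (rule linearI) (simp_all add: comm_add_right comm_scale_right)
lemma linear_comm_left: "linear (\<lambda>Y. comm Y X)"
  by (rule linearI) (simp_all add: comm_add_left comm_scale_left)

lemma lie_gen_sub: "subspace (lie_gen G)"
  unfolding lie_gen_def by (rule subspace_Inter) auto
lemma lie_gen_G: "G \<subseteq> lie_gen G"
  unfolding lie_gen_def by auto
lemma lie_gen_comm: "X \<in> lie_gen G \<Longrightarrow> Y \<in> lie_gen G \<Longrightarrow> comm X Y \<in> lie_gen G"
  unfolding lie_gen_def by auto
lemma lie_gen_min: "subspace V \<Longrightarrow> G \<subseteq> V \<Longrightarrow> (\<And>X Y. X\<in>V \<Longrightarrow> Y\<in>V \<Longrightarrow> comm X Y \<in> V) \<Longrightarrow> lie_gen G \<subseteq> V"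
  unfolding lie_gen_def by auto

lemma word_X: "comm X (alt_word X Y ks M) = alt_word X Y (1#0#ks) M"
  by (simp add: ad_def)
lemma word_Y: "comm Y (alt_word X Y ks M) = alt_word X Y (0#1#ks) M"
  by (simp add: ad_def)

lemma span_comm_closed:
  assumes "\<And>w. w \<in> W \<Longrightarrow> comm X w \<in> W" and "Z \<in> span W"
  shows "comm X Z \<in> span W"
proof -
  have "comm X Z \<in> comm X ` span W" using assms(2) by blast
  also have "\<dots> = span (comm X ` W)" by (metis span_linear_image[OF linear_comm_right])
  also have "\<dots> \<subseteq> span W" by (rule span_mono) (use assms(1) in blast)
  finally show ?thesis .
qed

lemma comm_zero_left[simp]: "comm 0 Z = 0" and comm_zero_right[simp]: "comm Z 0 = 0"
  unfolding comm_def by simp_all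

lemma ideal_part:
  fixes X Y :: "'n::finite cmat"
  defines "S \<equiv> span {alt_word X Y ks (comm X Y) | ks. True}"
  assumes P: "P \<in> lie_gen {X,Y}" and Q: "Q \<in> lie_gen {X,Y}"
  shows "comm P Q \<in> S"
proof -
  let ?W = "{alt_word X Y ks (comm X Y) | ks. True}"
  have SX: "comm X Z \<in> S" if "Z \<in> S" for Z
    unfolding S_def by (rule span_comm_closed[OF _ that[unfolded S_def]])
      (auto simp del: alt_word.simps simp: word_X)
  have SY: "comm Y Z \<in> S" if "Z \<in> S" for Z
    unfolding S_def by (rule span_comm_closed[OF _ that[unfolded S_def]])
      (auto simp del: alt_word.simps simp: word_Y)
  have subS: "subspace S" unfolding S_def by (rule subspace_span)
  have XY: "comm X Y \<in> S" unfolding S_def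
    by (rule span_base) (metis (mono_tags, lifting) alt_word.simps(1) mem_Collect_eq)
  define N where "N = {P. \<forall>Z\<in>S. comm P Z \<in> S}"
  have subN: "subspace N"
    unfolding N_def using subS
    by (auto simp: subspace_def comm_add_left comm_scale_left)
  have "lie_gen {X,Y} \<subseteq> N"
  proof (rule lie_gen_min[OF subN])
    show "{X,Y} \<subseteq> N" using SX SY by (auto simp: N_def)
    fix A B assume "A \<in> N" "B \<in> N"
    then show "comm A B \<in> N" using subS
      by (auto simp: N_def jacobi subspace_diff)
  qed
  hence inN: "A \<in> lie_gen {X,Y} \<Longrightarrow> Z \<in> S \<Longrightarrow> comm A Z \<in> S" for A Z
    by (auto simp: N_def)
  define R where "R = {Q. comm X Q \<in> S \<and> comm Y Q \<in> S} \<inter> lie_gen {X,Y}"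
  have subR: "subspace R"
    unfolding R_def using subS
    by (intro subspace_inter lie_gen_sub) (auto simp: subspace_def comm_add_right comm_scale_right)
  have "lie_gen {X,Y} \<subseteq> R"
  proof (rule lie_gen_min[OF subR])
    have "comm Y X \<in> S" using XY subS by (metis comm_antisym subspace_neg)
    then show "{X,Y} \<subseteq> R" using XY subS lie_gen_G[of "{X,Y}"]
      by (auto simp: R_def comm_self subspace_0)
    fix A B assume A: "A \<in> R" and B: "B \<in> R"
    have e: "comm Z (comm A B) = - comm B (comm Z A) + comm A (comm Z B)" for Z
      using jacobi[of Z A B] comm_antisym[of "comm Z A" B] by (simp add: algebra_simps)
    have "comm Z (comm A B) \<in> S" if "Z = X \<or> Z = Y" for Z
      unfolding e using A B that subS inN
      by (intro subspace_add subspace_neg) (auto simp: R_def)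
    then show "comm A B \<in> R" using A B by (auto simp: R_def lie_gen_comm)
  qed
  hence inR: "A \<in> lie_gen {X,Y} \<Longrightarrow> comm X A \<in> S \<and> comm Y A \<in> S" for A
    by (auto simp: R_def)
  define T where "T = {P. \<forall>Q\<in>lie_gen {X,Y}. comm P Q \<in> S} \<inter> lie_gen {X,Y}"
  have subT: "subspace T"
    unfolding T_def using subS
    by (intro subspace_inter lie_gen_sub) (auto simp: subspace_def comm_add_left comm_scale_left)
  have "lie_gen {X,Y} \<subseteq> T"
  proof (rule lie_gen_min[OF subT])
    show "{X,Y} \<subseteq> T" using inR lie_gen_G[of "{X,Y}"] by (auto simp: T_def)
    fix A B assume A: "A \<in> T" and B: "B \<in> T"
    then show "comm A B \<in> T" using subS
      by (auto simp: T_def jacobi lie_gen_comm intro!: subspace_diff)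
  qed
  then show ?thesis using P Q by (auto simp: T_def)
qed

definition Em :: "'n::finite \<Rightarrow> 'n \<Rightarrow> 'n cmat" where
  "Em p q = (\<chi> r s. if r = p \<and> s = q then 1 else 0)"
definition csc :: "complex \<Rightarrow> 'n::finite cmat \<Rightarrow> 'n cmat" where
  "csc c M = (\<chi> r s. c * M $ r $ s)"

lemma Em_mult: "Em a b ** Em c d = (if b = c then Em a d else 0)"
proof -
  have "(\<Sum>k\<in>UNIV. (if r = a \<and> k = b then 1 else 0) * (if k = c \<and> s = d then 1 else (0::complex)))
      = (if b = c \<and> r = a \<and> s = d then 1 else 0)" for r s
  proof -
    have "(\<lambda>k. (if r = a \<and> k = b then 1 else 0) * (if k = c \<and> s = d then 1 else (0::complex)))
       = (\<lambda>k. if k = b then (if b = c \<and> r = a \<and> s = d then 1 else 0) else 0)" (is "?f = ?g") by auto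
    have "sum ?g UNIV = (if b = c \<and> r = a \<and> s = d then 1 else 0)" by (simp add: sum.delta)
    then show ?thesis unfolding \<open>?f = ?g\<close> .
  qed
  then show ?thesis by (auto simp: Em_def matrix_matrix_mult_def vec_eq_iff)
qed

lemma madd_r: "((B::'n::finite cmat) + C) ** A = B ** A + C ** A"
  by (simp add: vec_eq_iff matrix_matrix_mult_def sum.distrib algebra_simps)
lemma csc_mult_l: "csc c M ** N = csc c (M ** N)"
  by (simp add: csc_def matrix_matrix_mult_def vec_eq_iff sum_distrib_left mult.assoc)
lemma csc_mult_r: "M ** csc c N = csc c (M ** N)"
  by (simp add: csc_def matrix_matrix_mult_def vec_eq_iff sum_distrib_left algebra_simps)
lemma csc_diff: "csc c M - csc c N = csc c (M - N)"
  by (simp add: csc_def vec_eq_iff algebra_simps)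

definition Bm :: "'n::finite \<Rightarrow> 'n \<Rightarrow> 'n cmat" where
  "Bm p q = Em p q - Em q p"
definition Cm :: "'n::finite \<Rightarrow> 'n \<Rightarrow> 'n cmat" where
  "Cm p q = csc \<i> (Em p q + Em q p)"

lemma Em_adj: "adjoint_mat (Em p q) = Em q p"
  unfolding adjoint_mat_def Em_def by (simp add: vec_eq_iff)
lemma adj_diff: "adjoint_mat (M - N) = adjoint_mat M - adjoint_mat N"
  unfolding adjoint_mat_def by (simp add: vec_eq_iff)
lemma adj_add: "adjoint_mat (M + N) = adjoint_mat M + adjoint_mat N"
  unfolding adjoint_mat_def by (simp add: vec_eq_iff)
lemma adj_csc: "adjoint_mat (csc c M) = csc (cnj c) (adjoint_mat M)"
  unfolding adjoint_mat_def csc_def by (simp add: vec_eq_iff)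
lemma csc_neg: "csc (- c) M = - csc c M"
  unfolding csc_def by (simp add: vec_eq_iff)
lemma Bm_u: "Bm p q \<in> u_alg"
  unfolding u_alg_def Bm_def by (simp add: adj_diff Em_adj)
lemma Cm_u: "Cm p q \<in> u_alg"
  unfolding u_alg_def Cm_def by (simp add: adj_csc adj_add Em_adj csc_neg add.commute)

lemma comm_BC: "comm (Bm p q) (Cm p q) $ r $ s =
   2 * \<i> * ((if r = p \<and> s = p then 1 else 0) - (if r = q \<and> s = q then 1 else 0))"
proof (cases "p = q")
  case True
  then show ?thesis by (simp add: Bm_def comm_def)
next
  case False
  have "comm (Bm p q) (Cm p q) = csc \<i> ((Em p q - Em q p) ** (Em p q + Em q p) - (Em p q + Em q p) ** (Em p q - Em q p))"
    unfolding comm_def Bm_def Cm_def csc_mult_l csc_mult_r csc_diff ..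
  also have "\<dots> = csc \<i> (2 *\<^sub>R (Em p p - Em q q))"
    using False by (simp add: msub_l msub_r matrix_add_ldistrib madd_r Em_mult algebra_simps scaleR_2)
  finally show ?thesis by (simp add: csc_def Em_def scaleR_conv_of_real)
qed

lemma offdiag:
  fixes M :: "'n::finite cmat"
  assumes "M \<in> u_alg"
  shows "\<exists>D X. D \<in> u_alg \<and> X \<in> u_alg \<and> comm D X = (\<chi> r s. if r = s then 0 else M $ r $ s)"
proof -
  obtain f :: "'n \<Rightarrow> nat" and n where "inj_on f UNIV"
    using finite_imp_inj_to_nat_seg[of "UNIV::'n set"] by auto
  hence inj: "f r = f s \<Longrightarrow> r = s" for r s by (simp add: inj_on_def)
  define d where "d r = real (f r)" for r
  have dne: "r \<noteq> s \<Longrightarrow> d r - d s \<noteq> 0" for r s using inj by (auto simp: d_def)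
  define D :: "'n cmat" where "D = (\<chi> r s. if r = s then \<i> * of_real (d r) else 0)"
  define X :: "'n cmat" where "X = (\<chi> r s. if r = s then 0 else M $ r $ s / (\<i> * of_real (d r - d s)))"
  have adj: "cnj (M $ s $ r) = - M $ r $ s" for r s
    using assms by (auto simp: u_alg_def adjoint_mat_def vec_eq_iff)
  have "D \<in> u_alg" by (auto simp: u_alg_def adjoint_mat_def D_def vec_eq_iff)
  moreover have "X \<in> u_alg"
  proof -
    have "cnj (M $ s $ r / (\<i> * of_real (d s - d r))) = - (M $ r $ s / (\<i> * of_real (d r - d s)))"
      if "r \<noteq> s" for r s
    proof -
      have "cnj (M $ s $ r / (\<i> * of_real (d s - d r))) = cnj (M $ s $ r) / (- \<i> * of_real (d s - d r))"
        by simp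
      also have "\<dots> = - M $ r $ s / (- \<i> * of_real (d s - d r))" by (simp add: adj)
      also have "\<dots> = - (M $ r $ s / (\<i> * of_real (d r - d s)))"
        by (simp add: field_simps of_real_diff)
      finally show ?thesis .
    qed
    then show ?thesis by (auto simp: u_alg_def adjoint_mat_def X_def vec_eq_iff)
  qed
  moreover have "comm D X = (\<chi> r s. if r = s then 0 else M $ r $ s)"
  proof -
    have DX: "(D ** X) $ r $ s = \<i> * of_real (d r) * X $ r $ s" for r s
    proof -
      have "(D ** X) $ r $ s = (\<Sum>k\<in>UNIV. (if r = k then \<i> * of_real (d r) else 0) * X $ k $ s)"
        by (simp add: matrix_matrix_mult_def D_def)
      also have "\<dots> = (\<Sum>k\<in>UNIV. if k = r then \<i> * of_real (d r) * X $ r $ s else 0)"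
        by (rule sum.cong) auto
      also have "\<dots> = \<i> * of_real (d r) * X $ r $ s" by simp
      finally show ?thesis .
    qed
    have XD: "(X ** D) $ r $ s = \<i> * of_real (d s) * X $ r $ s" for r s
    proof -
      have "(X ** D) $ r $ s = (\<Sum>k\<in>UNIV. X $ r $ k * (if k = s then \<i> * of_real (d k) else 0))"
        by (simp add: matrix_matrix_mult_def D_def)
      also have "\<dots> = (\<Sum>k\<in>UNIV. if k = s then \<i> * of_real (d s) * X $ r $ s else 0)"
        by (rule sum.cong) auto
      also have "\<dots> = \<i> * of_real (d s) * X $ r $ s" by simp
      finally show ?thesis .
    qed
    have "\<i> * of_real (d r) * X $ r $ s - \<i> * of_real (d s) * X $ r $ s = (if r = s then 0 else M $ r $ s)" for r s
    proof (cases "r = s")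
      case False
      have nz: "\<i> * of_real (d r - d s) \<noteq> 0" using dne[OF False] by simp
      have "\<i> * of_real (d r) * X $ r $ s - \<i> * of_real (d s) * X $ r $ s = (\<i> * of_real (d r - d s)) * X $ r $ s"
        by (simp add: algebra_simps)
      also have "\<dots> = M $ r $ s" using False nz by (simp add: X_def)
      finally show ?thesis using False by simp
    qed (simp add: X_def)
    then show ?thesis by (simp add: comm_def vec_eq_iff DX XD)
  qed
  ultimately show ?thesis by blast
qed

lemma trace_comm: "trace (comm X Y) = 0"
  unfolding comm_def using trace_mul_sym[of X Y] by (simp add: trace_sub)

lemma trace_zero: "trace (0::'n::finite cmat) = 0"
  by (simp add: trace_def)

lemma trace_scaleR: "trace (c *\<^sub>R (M::'n::finite cmat)) = c *\<^sub>R trace M"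
  by (simp add: trace_def scaleR_sum_right)

lemma word_in:
  assumes "X \<in> V" "Y \<in> V" "M \<in> V" "\<And>a b. a \<in> V \<Longrightarrow> b \<in> V \<Longrightarrow> comm a b \<in> V"
  shows "alt_word X Y ks M \<in> V"
  using assms(1,2)
proof (induction ks arbitrary: X Y)
  case Nil then show ?case using assms(3) by simp
next
  case (Cons k ks)
  have w: "alt_word Y X ks M \<in> V" using Cons by blast
  have "(ad X ^^ j) Z \<in> V" if "Z \<in> V" for j Z
  proof (induction j)
    case 0 show ?case using that by simp
  next
    case (Suc j) then show ?case using assms(4)[OF Cons.prems(1)] by (simp add: ad_def)
  qed
  then show ?case using w by simp
qed

lemma word_trace: "trace (alt_word X Y ks (comm P Q)) = 0"
proof (induction ks arbitrary: X Y)
  case Nil then show ?case by (simp add: trace_comm)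
next
  case (Cons k ks)
  show ?case
  proof (cases k)
    case 0 then show ?thesis using Cons.IH by simp
  next
    case (Suc j)
    have "alt_word X Y (k # ks) (comm P Q) = comm X ((ad X ^^ j) (alt_word Y X ks (comm P Q)))"
      unfolding Suc alt_word.simps funpow.simps(2) o_apply ad_def ..
    then show ?thesis by (simp only: trace_comm)
  qed
qed

lemma su_decomp:
  fixes M :: "'n::finite cmat"
  assumes V: "subspace V" and C: "\<And>P Q. P \<in> u_alg \<Longrightarrow> Q \<in> u_alg \<Longrightarrow> comm P Q \<in> V"
    and M: "M \<in> su_alg"
  shows "M \<in> V"
proof -
  have Mu: "M \<in> u_alg" and tr: "trace M = 0" using M by (auto simp: su_alg_def u_alg_def)
  obtain D X where DX: "D \<in> u_alg" "X \<in> u_alg" and DXe: "comm D X = (\<chi> r s. if r = s then 0 else M $ r $ s)"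
    using offdiag[OF Mu] by blast
  define j0 :: 'n where "j0 = undefined"
  define t where "t p = Im (M $ p $ p)" for p
  have adj: "cnj (M $ s $ r) = - M $ r $ s" for r s
    using Mu by (auto simp: u_alg_def adjoint_mat_def vec_eq_iff)
  have Mdiag: "M $ r $ r = \<i> * of_real (t r)" for r
    using adj[of r r] by (auto simp: complex_eq_iff t_def)
  have tsum: "(\<Sum>p\<in>UNIV. t p) = 0"
    using tr by (simp add: trace_def t_def flip: Im_sum)
  have eq: "M = comm D X + (\<Sum>p\<in>UNIV. (t p / 2) *\<^sub>R comm (Bm p j0) (Cm p j0))"
  proof (subst vec_eq_iff, intro allI, subst vec_eq_iff, intro allI)
    fix r s
    show "M $ r $ s = (comm D X + (\<Sum>p\<in>UNIV. (t p / 2) *\<^sub>R comm (Bm p j0) (Cm p j0))) $ r $ s"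
    proof (cases "r = s")
      case False
      have "((t p / 2) *\<^sub>R comm (Bm p j0) (Cm p j0)) $ r $ s = 0" for p
        using False by (auto simp: comm_BC)
      then show ?thesis using False by (simp add: DXe del: vector_scaleR_component)
    next
      case True
      have "(\<Sum>p\<in>UNIV. ((t p / 2) *\<^sub>R comm (Bm p j0) (Cm p j0)) $ r $ r)
          = (\<Sum>p\<in>UNIV. (if p = r then \<i> * of_real (t p) else 0) - (if r = j0 then \<i> * of_real (t p) else 0))"
        by (rule sum.cong) (auto simp: comm_BC scaleR_conv_of_real[where 'a=complex])
      also have "\<dots> = \<i> * of_real (t r) - (if r = j0 then \<i> * of_real (\<Sum>p\<in>UNIV. t p) else 0)"
        by (cases "r = j0") (simp_all add: sum_subtractf sum_distrib_left)
      also have "\<dots> = M $ r $ r" by (simp add: tsum Mdiag)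
      finally show ?thesis using True by (simp add: DXe)
    qed
  qed
  have "comm D X \<in> V" using C DX by blast
  moreover have "(\<Sum>p\<in>UNIV. (t p / 2) *\<^sub>R comm (Bm p j0) (Cm p j0)) \<in> V"
    by (intro subspace_sum[OF V] subspace_scale[OF V] C Bm_u Cm_u)
  ultimately have "comm D X + (\<Sum>p\<in>UNIV. (t p / 2) *\<^sub>R comm (Bm p j0) (Cm p j0)) \<in> V"
    by (rule subspace_add[OF V])
  then show ?thesis by (subst eq)
qed

theorem lemma2p3:
  fixes A L :: "real^'n^'n"
  assumes "transpose A = A" and "transpose L = L"
    and "lie_gen {imat A, imat L} = u_alg"
  shows "span {alt_word (imat A) (imat L) ks (comm (imat A) (imat L)) | ks. True} = su_alg"
proof
  let ?G = "{imat A, imat L}"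
  let ?S = "span {alt_word (imat A) (imat L) ks (comm (imat A) (imat L)) | ks. True}"
  have suE: "su_alg = lie_gen ?G \<inter> {M. trace M = 0}"
    using assms(3) by (auto simp: su_alg_def u_alg_def)
  have subsu: "subspace (su_alg :: 'n cmat set)"
    unfolding suE by (intro subspace_inter lie_gen_sub) (auto simp: subspace_def trace_add trace_scaleR trace_zero)
  show "?S \<subseteq> su_alg"
  proof (rule span_minimal[OF _ subsu])
    have iA: "imat A \<in> lie_gen ?G" and iL: "imat L \<in> lie_gen ?G" using lie_gen_G by blast+
    show "{alt_word (imat A) (imat L) ks (comm (imat A) (imat L)) | ks. True} \<subseteq> su_alg"
    proof
      fix w assume "w \<in> {alt_word (imat A) (imat L) ks (comm (imat A) (imat L)) | ks. True}"
      then obtain ks where w: "w = alt_word (imat A) (imat L) ks (comm (imat A) (imat L))" by blast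
      have "w \<in> lie_gen ?G" unfolding w
        by (rule word_in) (use \<open>imat A \<in> lie_gen ?G\<close> \<open>imat L \<in> lie_gen ?G\<close> lie_gen_comm in blast)+
      moreover have "trace w = 0" unfolding w by (rule word_trace)
      ultimately show "w \<in> su_alg" unfolding suE by blast
    qed
  qed
  show "su_alg \<subseteq> ?S"
  proof
    fix M :: "'n cmat" assume "M \<in> su_alg"
    show "M \<in> ?S"
    proof (rule su_decomp[OF subspace_span _ \<open>M \<in> su_alg\<close>])
      fix P Q :: "'n cmat" assume "P \<in> u_alg" "Q \<in> u_alg"
      then show "comm P Q \<in> ?S" using ideal_part[of P "imat A" "imat L" Q] assms(3) by simp
    qed
  qed
qed

end
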